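(* Let $f=\frac1n\sum_{i=1}^n f_i$ be $L$-smooth and let the iterates be generated by Algorithm EControl (described in the context) with stepsize $\gamma$, parameter $\eta$ and compressor $\mathcal{C}_\delta$. With $E_t=\frac1n\sum_{i}\mathbb{E}\|e_t^i\|^2$ and $H_t=\frac1n\sum_i\mathbb{E}\|\eta e_t^i+g_t^i-h_t^i\|^2$, for every $t\ge0$, $$\mathbb{E}\|x_{t+1}-x_t\|^2\le\gamma^2\left(2(1-\delta)H_t+4\eta^2E_t+4\mathbb{E}\|\nabla f(x_t)\|^2+\frac{2\sigma^2}{n}\right).$$
   Context: $\mathcal{C}_\delta$ ($0<\delta\le1$) is a possibly randomized map with $\mathbb{E}\|\mathcal{C}_\delta(x)-x\|^2\le(1-\delta)\|x\|^2$ for all $x$, independent randomness at each call. Stochastic gradient oracles $g^i(x)$ of $f_i$ satisfy $\mathbb{E}[g^i(x)]=\nabla f_i(x)$, $\mathbb{E}\|g^i(x)-\nabla f_i(x)\|^2\le\sigma^2$, fresh independent randomness per call. Algorithm EControl: input $x_0$, $\gamma>0$, $\eta>0$, $e_0^i=0$, $h_0^i=g^i(x_0)$, $h_0=\frac1n\sum_i h_0^i$. For $t=0,1,\dots$: $g_t^i=g^i(x_t)$, $\Delta_t^i=\mathcal{C}_\delta(\eta e_t^i+g_t^i-h_t^i)$, $e_{t+1}^i=e_t^i+g_t^i-h_t^i-\Delta_t^i$, $h_{t+1}^i=h_t^i+\Delta_t^i$; $x_{t+1}=x_t-\gamma h_t-\frac\gamma n\sum_i\Delta_t^i$, $h_{t+1}=h_t+\frac1n\sum_i\Delta_t^i$.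 *)

theory Defs
  imports "HOL-Probability.Probability"
begin

text \<open>Each call of a stochastic oracle / of the compressor consumes a fresh random seed.
  Oracle t i: the seed used by worker i for its oracle call at step t
  (Oracle 0 i is the call producing h_0^i = g^i(x_0), Oracle (Suc t) i the call g_t^i = g^i(x_t));
  Comp t i: the seed used by worker i in the compressor call at step t.\<close>
datatype call = Oracle nat nat | Comp nat nat

text \<open>State of EControl at time t: (x_t, e_t^., h_t^., h_t).  Workers are 0..n-1.
  g i x s : stochastic gradient oracle of worker i at point x with seed s;
  C v s : compressor applied to v with seed s.\<close>
fun econtrol ::
  "(nat \<Rightarrow> 'v::real_normed_vector \<Rightarrow> 's \<Rightarrow> 'v) \<Rightarrow> ('v \<Rightarrow> 's \<Rightarrow> 'v) \<Rightarrow> nat \<Rightarrow> real \<Rightarrow> real \<Rightarrow> 'v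
    \<Rightarrow> (call \<Rightarrow> 's) \<Rightarrow> nat \<Rightarrow> 'v \<times> (nat \<Rightarrow> 'v) \<times> (nat \<Rightarrow> 'v) \<times> 'v" where
  "econtrol g C n \<gamma> \<eta> x0 w 0 =
     (x0, (\<lambda>i. 0), (\<lambda>i. g i x0 (w (Oracle 0 i))),
      (1 / real n) *\<^sub>R (\<Sum>i<n. g i x0 (w (Oracle 0 i))))"
| "econtrol g C n \<gamma> \<eta> x0 w (Suc t) =
     (let (x, e, h, hb) = econtrol g C n \<gamma> \<eta> x0 w t;
          gt = (\<lambda>i. g i x (w (Oracle (Suc t) i)));
          \<Delta> = (\<lambda>i. C (\<eta> *\<^sub>R e i + gt i - h i) (w (Comp t i)))
      in (x - \<gamma> *\<^sub>R hb - (\<gamma> / real n) *\<^sub>R (\<Sum>i<n. \<Delta> i),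
          (\<lambda>i. e i + gt i - h i - \<Delta> i),
          (\<lambda>i. h i + \<Delta> i),
          hb + (1 / real n) *\<^sub>R (\<Sum>i<n. \<Delta> i)))"

definition ec_x where "ec_x g C n \<gamma> \<eta> x0 w t = fst (econtrol g C n \<gamma> \<eta> x0 w t)"
definition ec_e where "ec_e g C n \<gamma> \<eta> x0 w t i = fst (snd (econtrol g C n \<gamma> \<eta> x0 w t)) i"
definition ec_h where "ec_h g C n \<gamma> \<eta> x0 w t i = fst (snd (snd (econtrol g C n \<gamma> \<eta> x0 w t))) i"
definition ec_g where "ec_g g C n \<gamma> \<eta> x0 w t i = g i (ec_x g C n \<gamma> \<eta> x0 w t) (w (Oracle (Suc t) i))"

end

theory Submission
  imports Defs
begin


lemma single_step:
  fixes \<phi> :: "'s \<Rightarrow> 'v::euclidean_space"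
  assumes "prob_space \<mu>" and meas: "\<phi> \<in> borel_measurable \<mu>" and int: "integrable \<mu> \<phi>"
    and zero: "(\<integral>s. \<phi> s \<partial>\<mu>) = 0"
  shows "(\<integral>\<^sup>+s. ennreal ((norm (c + \<phi> s))\<^sup>2) \<partial>\<mu>) \<le> ennreal ((norm c)\<^sup>2) + (\<integral>\<^sup>+s. ennreal ((norm (\<phi> s))\<^sup>2) \<partial>\<mu>)"
proof (cases "(\<integral>\<^sup>+s. ennreal ((norm (\<phi> s))\<^sup>2) \<partial>\<mu>) = \<infinity>")
  case True then show ?thesis by simp
next
  case False
  interpret prob_space \<mu> by fact
  obtain r where r: "(\<integral>\<^sup>+s. ennreal ((norm (\<phi> s))\<^sup>2) \<partial>\<mu>) = ennreal r" "r \<ge> 0"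
    using False by (cases "(\<integral>\<^sup>+s. ennreal ((norm (\<phi> s))\<^sup>2) \<partial>\<mu>)") auto
  have sq: "integrable \<mu> (\<lambda>s. (norm (\<phi> s))\<^sup>2)"
    by (rule integrableI_nn_integral_finite[OF _ _ r(1)]) (use meas in auto)
  have ir: "integral\<^sup>L \<mu> (\<lambda>s. (norm (\<phi> s))\<^sup>2) = r"
    using nn_integral_eq_integral[OF sq] r by auto
  have eq: "\<And>s. (norm (c + \<phi> s))\<^sup>2 = (norm c)\<^sup>2 + 2 * (c \<bullet> \<phi> s) + (norm (\<phi> s))\<^sup>2"
    by (simp add: power2_norm_eq_inner inner_add_left inner_add_right inner_commute)
  have int2: "integrable \<mu> (\<lambda>s. (norm c)\<^sup>2 + 2 * (c \<bullet> \<phi> s) + (norm (\<phi> s))\<^sup>2)"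
    using int sq by auto
  have "(\<integral>\<^sup>+s. ennreal ((norm (c + \<phi> s))\<^sup>2) \<partial>\<mu>) = ennreal (\<integral>s. (norm c)\<^sup>2 + 2 * (c \<bullet> \<phi> s) + (norm (\<phi> s))\<^sup>2 \<partial>\<mu>)"
    unfolding eq by (rule nn_integral_eq_integral[OF int2]) (auto simp: eq[symmetric])
  also have "(\<integral>s. (norm c)\<^sup>2 + 2 * (c \<bullet> \<phi> s) + (norm (\<phi> s))\<^sup>2 \<partial>\<mu>) = (norm c)\<^sup>2 + r"
    using int sq zero ir by (simp add: integral_add prob_space)
  finally show ?thesis using r by (simp add: ennreal_plus)
qed


lemma noise:
  fixes \<phi> :: "nat \<Rightarrow> 's \<Rightarrow> 'v::euclidean_space" and Mi :: "'i \<Rightarrow> 's measure"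
    and \<rho> :: "nat \<Rightarrow> 'i"
  assumes P: "\<And>j. prob_space (Mi j)" and fin: "finite I" and inj: "inj_on \<rho> I"
    and meas: "\<And>i. i \<in> I \<Longrightarrow> \<phi> i \<in> borel_measurable (Mi (\<rho> i))"
    and int: "\<And>i. i \<in> I \<Longrightarrow> integrable (Mi (\<rho> i)) (\<phi> i)"
    and zero: "\<And>i. i \<in> I \<Longrightarrow> (\<integral>s. \<phi> i s \<partial>Mi (\<rho> i)) = 0"
    and var: "\<And>i. i \<in> I \<Longrightarrow> (\<integral>\<^sup>+s. ennreal ((norm (\<phi> i s))\<^sup>2) \<partial>Mi (\<rho> i)) \<le> ennreal (v i)"
    and vpos: "\<And>i. i \<in> I \<Longrightarrow> v i \<ge> 0"
  shows "(\<integral>\<^sup>+y. ennreal ((norm (c + (\<Sum>i\<in>I. \<phi> i (y (\<rho> i)))))\<^sup>2) \<partial>PiM (\<rho> ` I) Mi)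
           \<le> ennreal ((norm c)\<^sup>2) + ennreal (\<Sum>i\<in>I. v i)"
  using fin inj meas int zero var vpos
proof (induction I arbitrary: c rule: finite_induct)
  case empty
  interpret prob_space "PiM {} Mi" by (rule prob_space_PiM) (use P in auto)
  show ?case by (simp add: emeasure_space_1)
next
  case (insert j I)
  interpret product_sigma_finite Mi by (simp add: P product_sigma_finite_def prob_space_imp_sigma_finite)
  interpret PI: prob_space "PiM (\<rho> ` I) Mi" by (rule prob_space_PiM) (use P in auto)
  have nj: "\<rho> j \<notin> \<rho> ` I" using insert by auto
  have img: "\<rho> ` insert j I = insert (\<rho> j) (\<rho> ` I)" by simp
  have mphi[measurable]: "\<And>i. i \<in> insert j I \<Longrightarrow> \<phi> i \<in> borel_measurable (Mi (\<rho> i))" using insert by auto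
  have comp: "\<And>i K. i \<in> insert j I \<Longrightarrow> \<rho> i \<in> K \<Longrightarrow> (\<lambda>y. \<phi> i (y (\<rho> i))) \<in> borel_measurable (PiM K Mi)"
  proof -
    fix i K assume "i \<in> insert j I" "\<rho> i \<in> K"
    then show "(\<lambda>y. \<phi> i (y (\<rho> i))) \<in> borel_measurable (PiM K Mi)"
      using measurable_compose[OF measurable_component_singleton[of "\<rho> i" K Mi] mphi[of i]] by auto
  qed
  have mS: "(\<lambda>y. \<Sum>i\<in>I. \<phi> i (y (\<rho> i))) \<in> borel_measurable (PiM (\<rho> ` I) Mi)"
    by (intro borel_measurable_sum comp) auto
  have mf: "(\<lambda>y. ennreal ((norm (c + (\<Sum>i\<in>insert j I. \<phi> i (y (\<rho> i)))))\<^sup>2)) \<in> borel_measurable (PiM (insert (\<rho> j) (\<rho> ` I)) Mi)"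
  proof -
    have [measurable]: "(\<lambda>y. (\<Sum>i\<in>insert j I. \<phi> i (y (\<rho> i)))) \<in> borel_measurable (PiM (insert (\<rho> j) (\<rho> ` I)) Mi)"
      by (intro borel_measurable_sum comp) auto
    show ?thesis by measurable
  qed
  have "(\<integral>\<^sup>+y. ennreal ((norm (c + (\<Sum>i\<in>insert j I. \<phi> i (y (\<rho> i)))))\<^sup>2) \<partial>PiM (\<rho> ` insert j I) Mi)
     = (\<integral>\<^sup>+x. (\<integral>\<^sup>+s. ennreal ((norm (c + (\<Sum>i\<in>insert j I. \<phi> i ((x(\<rho> j := s)) (\<rho> i)))))\<^sup>2) \<partial>Mi (\<rho> j)) \<partial>PiM (\<rho> ` I) Mi)"
    unfolding img by (rule product_nn_integral_insert[OF _ nj mf]) (use insert in auto)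
  also have "\<dots> = (\<integral>\<^sup>+x. (\<integral>\<^sup>+s. ennreal ((norm ((c + (\<Sum>i\<in>I. \<phi> i (x (\<rho> i)))) + \<phi> j s))\<^sup>2) \<partial>Mi (\<rho> j)) \<partial>PiM (\<rho> ` I) Mi)"
  proof -
    have "\<And>x s. (\<Sum>i\<in>insert j I. \<phi> i ((x(\<rho> j := s)) (\<rho> i))) = \<phi> j s + (\<Sum>i\<in>I. \<phi> i (x (\<rho> i)))"
    proof -
      fix x s
      have "(\<Sum>i\<in>I. \<phi> i ((x(\<rho> j := s)) (\<rho> i))) = (\<Sum>i\<in>I. \<phi> i (x (\<rho> i)))"
      proof (rule sum.cong)
        fix i assume "i \<in> I"
        then have "\<rho> i \<noteq> \<rho> j" using nj by (metis imageI)
        then show "\<phi> i ((x(\<rho> j := s)) (\<rho> i)) = \<phi> i (x (\<rho> i))" by simp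
      qed simp
      then show "(\<Sum>i\<in>insert j I. \<phi> i ((x(\<rho> j := s)) (\<rho> i))) = \<phi> j s + (\<Sum>i\<in>I. \<phi> i (x (\<rho> i)))"
        using insert by simp
    qed
    then show ?thesis by (simp add: algebra_simps)
  qed
  also have "\<dots> \<le> (\<integral>\<^sup>+x. ennreal ((norm (c + (\<Sum>i\<in>I. \<phi> i (x (\<rho> i)))))\<^sup>2) + ennreal (v j) \<partial>PiM (\<rho> ` I) Mi)"
    apply (rule nn_integral_mono)
    apply (rule order_trans[OF single_step[OF P]])
    using insert by (auto intro!: add_left_mono)
  also have "\<dots> = (\<integral>\<^sup>+x. ennreal ((norm (c + (\<Sum>i\<in>I. \<phi> i (x (\<rho> i)))))\<^sup>2) \<partial>PiM (\<rho> ` I) Mi) + ennreal (v j)"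
    by (subst nn_integral_add) (use mS in \<open>auto simp: PI.emeasure_space_1\<close>)
  also have "\<dots> \<le> ennreal ((norm c)\<^sup>2) + ennreal (\<Sum>i\<in>I. v i) + ennreal (v j)"
    by (rule add_right_mono, rule insert.IH) (use insert in auto)
  also have "\<dots> = ennreal ((norm c)\<^sup>2) + ennreal (\<Sum>i\<in>insert j I. v i)"
    using insert by (simp add: ennreal_plus sum_nonneg add.assoc add.commute)
  finally show ?case .
qed



definition ec_hb where "ec_hb g C n \<gamma> \<eta> x0 w t = snd (snd (snd (econtrol g C n \<gamma> \<eta> x0 w t)))"

lemma ec_0:
  "ec_x g C n \<gamma> \<eta> x0 w 0 = x0"
  "ec_e g C n \<gamma> \<eta> x0 w 0 i = 0"
  "ec_h g C n \<gamma> \<eta> x0 w 0 i = g i x0 (w (Oracle 0 i))"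
  "ec_hb g C n \<gamma> \<eta> x0 w 0 = (1 / real n) *\<^sub>R (\<Sum>i<n. g i x0 (w (Oracle 0 i)))"
  by (simp_all add: ec_x_def ec_e_def ec_h_def ec_hb_def)

definition ec_D where "ec_D g C n \<gamma> \<eta> x0 w t i = C (\<eta> *\<^sub>R ec_e g C n \<gamma> \<eta> x0 w t i + ec_g g C n \<gamma> \<eta> x0 w t i - ec_h g C n \<gamma> \<eta> x0 w t i) (w (Comp t i))"

lemma ec_Suc:
  fixes g :: "nat \<Rightarrow> 'v::real_normed_vector \<Rightarrow> 's \<Rightarrow> 'v"
  shows
  "ec_x g C n \<gamma> \<eta> x0 w (Suc t) = ec_x g C n \<gamma> \<eta> x0 w t - \<gamma> *\<^sub>R ec_hb g C n \<gamma> \<eta> x0 w t - (\<gamma> / real n) *\<^sub>R (\<Sum>i<n. ec_D g C n \<gamma> \<eta> x0 w t i)"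
  "ec_e g C n \<gamma> \<eta> x0 w (Suc t) i = ec_e g C n \<gamma> \<eta> x0 w t i + ec_g g C n \<gamma> \<eta> x0 w t i - ec_h g C n \<gamma> \<eta> x0 w t i - ec_D g C n \<gamma> \<eta> x0 w t i"
  "ec_h g C n \<gamma> \<eta> x0 w (Suc t) i = ec_h g C n \<gamma> \<eta> x0 w t i + ec_D g C n \<gamma> \<eta> x0 w t i"
  "ec_hb g C n \<gamma> \<eta> x0 w (Suc t) = ec_hb g C n \<gamma> \<eta> x0 w t + (1 / real n) *\<^sub>R (\<Sum>i<n. ec_D g C n \<gamma> \<eta> x0 w t i)"
  by (simp_all add: ec_D_def ec_x_def ec_e_def ec_h_def ec_hb_def ec_g_def Let_def case_prod_beta)

lemma ec_hb_avg:
  "ec_hb g C n \<gamma> \<eta> x0 w t = (1 / real n) *\<^sub>R (\<Sum>i<n. ec_h g C n \<gamma> \<eta> x0 w t i)"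
proof (induction t)
  case 0 then show ?case by (simp add: ec_0)
next
  case (Suc t) then show ?case by (simp add: ec_Suc sum.distrib scaleR_add_right)
qed

definition rel :: "nat \<Rightarrow> nat \<Rightarrow> call \<Rightarrow> bool" where
  "rel n t c = (case c of Oracle s i \<Rightarrow> s \<le> t \<and> i < n | Comp s i \<Rightarrow> s < t \<and> i < n)"

lemma ec_cong:
  assumes "\<And>c. rel n t c \<Longrightarrow> w c = w' c"
  shows "ec_x g C n \<gamma> \<eta> x0 w t = ec_x g C n \<gamma> \<eta> x0 w' t \<and> ec_hb g C n \<gamma> \<eta> x0 w t = ec_hb g C n \<gamma> \<eta> x0 w' t
     \<and> (\<forall>i<n. ec_e g C n \<gamma> \<eta> x0 w t i = ec_e g C n \<gamma> \<eta> x0 w' t i \<and> ec_h g C n \<gamma> \<eta> x0 w t i = ec_h g C n \<gamma> \<eta> x0 w' t i)"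
  using assms
proof (induction t)
  case 0
  have "\<And>i. i < n \<Longrightarrow> w (Oracle 0 i) = w' (Oracle 0 i)" using 0 by (simp add: rel_def)
  then show ?case by (simp add: ec_0)
next
  case (Suc t)
  have IH: "ec_x g C n \<gamma> \<eta> x0 w t = ec_x g C n \<gamma> \<eta> x0 w' t \<and> ec_hb g C n \<gamma> \<eta> x0 w t = ec_hb g C n \<gamma> \<eta> x0 w' t
     \<and> (\<forall>i<n. ec_e g C n \<gamma> \<eta> x0 w t i = ec_e g C n \<gamma> \<eta> x0 w' t i \<and> ec_h g C n \<gamma> \<eta> x0 w t i = ec_h g C n \<gamma> \<eta> x0 w' t i)"
    by (rule Suc.IH) (use Suc.prems in \<open>auto simp: rel_def split: call.splits\<close>)
  have o: "\<And>i. i < n \<Longrightarrow> w (Oracle (Suc t) i) = w' (Oracle (Suc t) i)"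
   and c: "\<And>i. i < n \<Longrightarrow> w (Comp t i) = w' (Comp t i)" using Suc.prems by (auto simp: rel_def)
  have gg: "\<And>i. i < n \<Longrightarrow> ec_g g C n \<gamma> \<eta> x0 w t i = ec_g g C n \<gamma> \<eta> x0 w' t i"
    using IH o by (simp add: ec_g_def)
  have D: "\<And>i. i < n \<Longrightarrow> ec_D g C n \<gamma> \<eta> x0 w t i = ec_D g C n \<gamma> \<eta> x0 w' t i"
    using IH gg c by (simp add: ec_D_def)
  have S: "(\<Sum>i<n. ec_D g C n \<gamma> \<eta> x0 w t i) = (\<Sum>i<n. ec_D g C n \<gamma> \<eta> x0 w' t i)"
    by (rule sum.cong) (use D in auto)
  show ?case unfolding ec_Suc using IH S D gg by simp
qed


definition Mc :: "(nat \<Rightarrow> 's measure) \<Rightarrow> 's measure \<Rightarrow> call \<Rightarrow> 's measure" where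
  "Mc SG SC c = (case c of Oracle _ i \<Rightarrow> SG i | Comp _ _ \<Rightarrow> SC)"

lemma Mc_simps[simp]: "Mc SG SC (Oracle s i) = SG i" "Mc SG SC (Comp s i) = SC"
  by (simp_all add: Mc_def)

lemma ec_meas:
  fixes g :: "nat \<Rightarrow> 'v::euclidean_space \<Rightarrow> 's \<Rightarrow> 'v" and w :: "'b \<Rightarrow> call \<Rightarrow> 's"
  assumes wm: "\<And>c. (\<lambda>z. w z c) \<in> measurable N (Mc SG SC c)"
    and g_meas: "\<And>i. i < n \<Longrightarrow> (\<lambda>p. g i (fst p) (snd p)) \<in> borel_measurable (borel \<Otimes>\<^sub>M SG i)"
    and C_meas: "(\<lambda>p. C (fst p) (snd p)) \<in> borel_measurable (borel \<Otimes>\<^sub>M SC)"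
  shows "(\<lambda>z. ec_x g C n \<gamma> \<eta> x0 (w z) t) \<in> borel_measurable N \<and> (\<lambda>z. ec_hb g C n \<gamma> \<eta> x0 (w z) t) \<in> borel_measurable N
     \<and> (\<forall>i<n. (\<lambda>z. ec_e g C n \<gamma> \<eta> x0 (w z) t i) \<in> borel_measurable N \<and> (\<lambda>z. ec_h g C n \<gamma> \<eta> x0 (w z) t i) \<in> borel_measurable N
          \<and> (\<lambda>z. ec_g g C n \<gamma> \<eta> x0 (w z) t i) \<in> borel_measurable N \<and> (\<lambda>z. ec_D g C n \<gamma> \<eta> x0 (w z) t i) \<in> borel_measurable N)"
proof -
  have gm: "(\<lambda>z. g i (X z) (w z (Oracle s i))) \<in> borel_measurable N" if "i < n" "X \<in> borel_measurable N" for i X s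
    using measurable_compose[OF measurable_Pair[OF that(2) wm[of "Oracle s i", simplified]] g_meas[OF that(1)]] by simp
  have Cm: "(\<lambda>z. C (X z) (w z (Comp s i))) \<in> borel_measurable N" if "X \<in> borel_measurable N" for X s i
    using measurable_compose[OF measurable_Pair[OF that(1) wm[of "Comp s i", simplified]] C_meas] by simp
  have base: "(\<lambda>z. ec_x g C n \<gamma> \<eta> x0 (w z) t) \<in> borel_measurable N \<and> (\<lambda>z. ec_hb g C n \<gamma> \<eta> x0 (w z) t) \<in> borel_measurable N
     \<and> (\<forall>i<n. (\<lambda>z. ec_e g C n \<gamma> \<eta> x0 (w z) t i) \<in> borel_measurable N \<and> (\<lambda>z. ec_h g C n \<gamma> \<eta> x0 (w z) t i) \<in> borel_measurable N)" for t
  proof (induction t)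
    case 0
    have "(\<lambda>z. \<Sum>i<n. g i x0 (w z (Oracle 0 i))) \<in> borel_measurable N"
      by (intro borel_measurable_sum gm) auto
    then show ?case by (auto simp: ec_0 intro!: gm)
  next
    case (Suc t)
    have G: "\<And>i. i < n \<Longrightarrow> (\<lambda>z. ec_g g C n \<gamma> \<eta> x0 (w z) t i) \<in> borel_measurable N"
      unfolding ec_g_def using Suc by (auto intro!: gm)
    have D: "\<And>i. i < n \<Longrightarrow> (\<lambda>z. ec_D g C n \<gamma> \<eta> x0 (w z) t i) \<in> borel_measurable N"
      unfolding ec_D_def using Suc G by (auto intro!: Cm borel_measurable_add borel_measurable_diff borel_measurable_scaleR)
    have S: "(\<lambda>z. \<Sum>i<n. ec_D g C n \<gamma> \<eta> x0 (w z) t i) \<in> borel_measurable N"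
      by (intro borel_measurable_sum D) auto
    show ?case unfolding ec_Suc using Suc G D S
      by (auto intro!: borel_measurable_add borel_measurable_diff borel_measurable_scaleR)
  qed
  have G: "\<And>i. i < n \<Longrightarrow> (\<lambda>z. ec_g g C n \<gamma> \<eta> x0 (w z) t i) \<in> borel_measurable N"
    unfolding ec_g_def using base by (auto intro!: gm)
  have D: "\<And>i. i < n \<Longrightarrow> (\<lambda>z. ec_D g C n \<gamma> \<eta> x0 (w z) t i) \<in> borel_measurable N"
    unfolding ec_D_def using base G by (auto intro!: Cm borel_measurable_add borel_measurable_diff borel_measurable_scaleR)
  show ?thesis using base G D by auto
qed



lemma sq2: "(norm (u + v))\<^sup>2 \<le> 2 * (norm u)\<^sup>2 + 2 * (norm (v::'v::real_normed_vector))\<^sup>2"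
proof -
  have "(norm (u + v))\<^sup>2 \<le> (norm u + norm v)\<^sup>2"
    by (rule power_mono[OF norm_triangle_ineq]) simp
  also have "\<dots> \<le> 2 * (norm u)\<^sup>2 + 2 * (norm v)\<^sup>2"
    using sum_squared_le_sum_of_squares_2[of "norm u" "norm v"] 
    by (smt (verit, best) zero_le_power2 power2_diff power2_sum)
  finally show ?thesis .
qed

lemma avg_sq:
  assumes "n > 0"
  shows "(norm ((1 / real n) *\<^sub>R (\<Sum>i<n. a i)))\<^sup>2 \<le> (1 / real n) * (\<Sum>i<n. (norm (a i :: 'v::real_normed_vector))\<^sup>2)"
proof -
  have "(norm (\<Sum>i<n. a i))\<^sup>2 \<le> (\<Sum>i<n. norm (a i))\<^sup>2"
    by (rule power_mono[OF norm_sum]) simp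
  also have "\<dots> \<le> (\<Sum>i<n. (norm (a i))\<^sup>2) * real n"
    using sum_squared_le_sum_of_squares[of "\<lambda>i. norm (a i)" "{..<n}"] by simp
  finally have *: "(norm (\<Sum>i<n. a i))\<^sup>2 \<le> (\<Sum>i<n. (norm (a i))\<^sup>2) * real n" .
  have "(norm ((1 / real n) *\<^sub>R (\<Sum>i<n. a i)))\<^sup>2 = (norm (\<Sum>i<n. a i))\<^sup>2 / (real n)\<^sup>2"
    by (simp add: power_divide)
  also have "\<dots> \<le> (\<Sum>i<n. (norm (a i))\<^sup>2) * real n / (real n)\<^sup>2"
    by (rule divide_right_mono[OF *]) simp
  also have "\<dots> = (1 / real n) * (\<Sum>i<n. (norm (a i))\<^sup>2)"
    using assms by (simp add: power2_eq_square)
  finally show ?thesis .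
qed


lemma ec_cong_all:
  assumes "\<And>c. rel n (Suc t) c \<Longrightarrow> w c = w' c" and "i < n"
  shows "ec_x g C n \<gamma> \<eta> x0 w t = ec_x g C n \<gamma> \<eta> x0 w' t"
    "ec_x g C n \<gamma> \<eta> x0 w (Suc t) = ec_x g C n \<gamma> \<eta> x0 w' (Suc t)"
    "ec_e g C n \<gamma> \<eta> x0 w t i = ec_e g C n \<gamma> \<eta> x0 w' t i"
    "ec_h g C n \<gamma> \<eta> x0 w t i = ec_h g C n \<gamma> \<eta> x0 w' t i"
    "ec_g g C n \<gamma> \<eta> x0 w t i = ec_g g C n \<gamma> \<eta> x0 w' t i"
    "ec_D g C n \<gamma> \<eta> x0 w t i = ec_D g C n \<gamma> \<eta> x0 w' t i"
proof -
  have A: "\<And>c. rel n t c \<Longrightarrow> w c = w' c" using assms(1) by (auto simp: rel_def split: call.splits)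
  note I = ec_cong[where g=g and C=C and \<gamma>=\<gamma> and \<eta>=\<eta> and ?x0.0=x0, OF A]
  note I2 = ec_cong[where g=g and C=C and \<gamma>=\<gamma> and \<eta>=\<eta> and ?x0.0=x0, OF assms(1)]
  have o: "w (Oracle (Suc t) i) = w' (Oracle (Suc t) i)" "w (Comp t i) = w' (Comp t i)"
    using assms by (auto simp: rel_def)
  show "ec_x g C n \<gamma> \<eta> x0 w t = ec_x g C n \<gamma> \<eta> x0 w' t" using I by simp
  show "ec_x g C n \<gamma> \<eta> x0 w (Suc t) = ec_x g C n \<gamma> \<eta> x0 w' (Suc t)" using I2 by simp
  show "ec_e g C n \<gamma> \<eta> x0 w t i = ec_e g C n \<gamma> \<eta> x0 w' t i" using I assms by simp
  show "ec_h g C n \<gamma> \<eta> x0 w t i = ec_h g C n \<gamma> \<eta> x0 w' t i" using I assms by simp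
  show G: "ec_g g C n \<gamma> \<eta> x0 w t i = ec_g g C n \<gamma> \<eta> x0 w' t i" using I o by (simp add: ec_g_def)
  show "ec_D g C n \<gamma> \<eta> x0 w t i = ec_D g C n \<gamma> \<eta> x0 w' t i" using I o G assms by (simp add: ec_D_def)
qed

definition ec_V where "ec_V g C n \<gamma> \<eta> x0 w t i = \<eta> *\<^sub>R ec_e g C n \<gamma> \<eta> x0 w t i + ec_g g C n \<gamma> \<eta> x0 w t i - ec_h g C n \<gamma> \<eta> x0 w t i"

definition pad :: "('s measure) \<Rightarrow> call set \<Rightarrow> (call \<Rightarrow> 's) \<Rightarrow> call \<Rightarrow> 's" where
  "pad MM K p c = (if c \<in> K then p c else (SOME s. s \<in> space MM))"

locale ec_setting =
  fixes M :: "'a measure" and W :: "call \<Rightarrow> 'a \<Rightarrow> 's"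
    and SG :: "nat \<Rightarrow> 's measure" and SC :: "'s measure"
    and g :: "nat \<Rightarrow> 'v::euclidean_space \<Rightarrow> 's \<Rightarrow> 'v" and C :: "'v \<Rightarrow> 's \<Rightarrow> 'v"
    and gradi :: "nat \<Rightarrow> 'v \<Rightarrow> 'v"
    and n :: nat and \<delta> \<sigma> :: real
  assumes PM: "prob_space M"
    and n: "n > 0" and \<delta>1: "\<delta> \<le> 1"
    and indep: "prob_space.indep_vars M (Mc SG SC) W UNIV"
    and distr_oracle: "\<And>s i. distr M (SG i) (W (Oracle s i)) = SG i"
    and distr_comp: "\<And>s i. distr M SC (W (Comp s i)) = SC"
    and g_meas: "\<And>i. i < n \<Longrightarrow> (\<lambda>p. g i (fst p) (snd p)) \<in> borel_measurable (borel \<Otimes>\<^sub>M SG i)"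
    and g_unbiased: "\<And>i x. i < n \<Longrightarrow> integrable (SG i) (g i x) \<and> (\<integral>s. g i x s \<partial>SG i) = gradi i x"
    and g_var: "\<And>i x. i < n \<Longrightarrow>
                  (\<integral>\<^sup>+s. ennreal ((norm (g i x s - gradi i x))\<^sup>2) \<partial>SG i) \<le> ennreal (\<sigma>\<^sup>2)"
    and C_meas: "(\<lambda>p. C (fst p) (snd p)) \<in> borel_measurable (borel \<Otimes>\<^sub>M SC)"
    and C_contr: "\<And>v. (\<integral>\<^sup>+s. ennreal ((norm (C v s - v))\<^sup>2) \<partial>SC) \<le> ennreal ((1 - \<delta>) * (norm v)\<^sup>2)"
begin

interpretation P: prob_space M by (rule PM)

abbreviation "MC \<equiv> Mc SG SC"

lemma rv: "W c \<in> measurable M (MC c)"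
  using indep unfolding P.indep_vars_def2 by auto

lemma PS: "prob_space (MC c)"
proof (cases c)
  case (Oracle s i)
  have "prob_space (distr M (SG i) (W (Oracle s i)))"
    by (rule P.prob_space_distr) (use rv[of "Oracle s i"] in simp)
  then show ?thesis using Oracle distr_oracle by simp
next
  case (Comp s i)
  have "prob_space (distr M SC (W (Comp s i)))"
    by (rule P.prob_space_distr) (use rv[of "Comp s i"] in simp)
  then show ?thesis using Comp distr_comp by simp
qed

lemma PS_SG: "prob_space (SG i)" using PS[of "Oracle 0 i"] by simp
lemma PS_SC: "prob_space SC" using PS[of "Comp 0 0"] by simp

lemma distr_MC: "distr M (MC c) (W c) = MC c"
  by (cases c) (simp_all add: distr_oracle distr_comp)

definition "JJ t = {c. rel n (Suc t) c}"

lemma JJ_finite: "finite (JJ t)"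
proof -
  have "JJ t \<subseteq> (\<lambda>(s,i). Oracle s i) ` ({..Suc t} \<times> {..<n}) \<union> (\<lambda>(s,i). Comp s i) ` ({..t} \<times> {..<n})"
    unfolding JJ_def rel_def by (auto split: call.splits simp: image_iff)
  then show ?thesis by (rule finite_subset) auto
qed

lemma JJ_ne: "JJ t \<noteq> {}"
  using n unfolding JJ_def rel_def by (auto intro!: exI[of _ "Oracle 0 0"])

abbreviation "pd K p c \<equiv> pad (MC c) K p c"

lemma pad_meas: "(\<lambda>p. pd K p c) \<in> measurable (PiM K MC) (MC c)"
proof (cases "c \<in> K")
  case True then show ?thesis by (simp add: pad_def measurable_component_singleton)
next
  case False
  have "space (MC c) \<noteq> {}" using PS[of c] prob_space.not_empty by blast
  then have "(SOME s. s \<in> space (MC c)) \<in> space (MC c)" by (meson ex_in_conv someI_ex)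
  then show ?thesis using False by (simp add: pad_def)
qed

lemma distr_restrict:
  assumes "K \<noteq> {}"
  shows "distr M (PiM K MC) (\<lambda>\<omega>. \<lambda>c\<in>K. W c \<omega>) = PiM K MC"
proof -
  have "P.indep_vars MC W K" by (rule P.indep_vars_subset[OF indep]) auto
  then have "distr M (PiM K MC) (\<lambda>\<omega>. \<lambda>c\<in>K. W c \<omega>) = PiM K (\<lambda>c. distr M (MC c) (W c))"
    using P.indep_vars_iff_distr_eq_PiM'[where M'=MC and X=W, OF assms] rv by auto
  also have "\<dots> = PiM K MC" by (rule PiM_cong) (auto simp: distr_MC)
  finally show ?thesis .
qed

lemma transfer:
  assumes K: "K \<noteq> {}"
    and Fm: "(\<lambda>p. F (\<lambda>c. pd K p c)) \<in> borel_measurable (PiM K MC)"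
    and Fc: "\<And>\<omega>. F (\<lambda>c. W c \<omega>) = F (\<lambda>c. pd K (\<lambda>c\<in>K. W c \<omega>) c)"
  shows "(\<integral>\<^sup>+\<omega>. F (\<lambda>c. W c \<omega>) \<partial>M) = (\<integral>\<^sup>+p. F (\<lambda>c. pd K p c) \<partial>PiM K MC)"
proof -
  have X: "(\<lambda>\<omega>. \<lambda>c\<in>K. W c \<omega>) \<in> measurable M (PiM K MC)"
    by (rule measurable_restrict) (rule rv)
  have "(\<integral>\<^sup>+p. F (\<lambda>c. pd K p c) \<partial>PiM K MC) = (\<integral>\<^sup>+p. F (\<lambda>c. pd K p c) \<partial>distr M (PiM K MC) (\<lambda>\<omega>. \<lambda>c\<in>K. W c \<omega>))"
    by (simp add: distr_restrict[OF K])
  also have "\<dots> = (\<integral>\<^sup>+\<omega>. F (\<lambda>c. pd K (\<lambda>c\<in>K. W c \<omega>) c) \<partial>M)"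
    by (rule nn_integral_distr[OF X]) (simp add: distr_restrict[OF K] Fm)
  finally show ?thesis by (simp add: Fc)
qed


lemma ec_D_V: "ec_D g C n \<gamma> \<eta> x0 w t i = C (ec_V g C n \<gamma> \<eta> x0 w t i) (w (Comp t i))"
  by (simp add: ec_D_def ec_V_def)

lemma partI:
  assumes i: "i < n"
  shows "(\<integral>\<^sup>+\<omega>. ennreal ((norm (ec_D g C n \<gamma> \<eta> x0 (\<lambda>c. W c \<omega>) t i - ec_V g C n \<gamma> \<eta> x0 (\<lambda>c. W c \<omega>) t i))\<^sup>2) \<partial>M)
    \<le> (\<integral>\<^sup>+\<omega>. ennreal ((1 - \<delta>) * (norm (ec_V g C n \<gamma> \<eta> x0 (\<lambda>c. W c \<omega>) t i))\<^sup>2) \<partial>M)"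
proof -
  interpret PSF: product_sigma_finite MC
    by (simp add: product_sigma_finite_def PS prob_space_imp_sigma_finite)
  define K where "K = JJ t"
  define k where "k = Comp t i"
  define K' where "K' = K - {k}"
  have kK: "k \<in> K" using i by (simp add: K_def k_def JJ_def rel_def)
  have KK: "K = insert k K'" using kK by (auto simp: K'_def)
  have finK': "finite K'" using JJ_finite by (simp add: K'_def K_def)
  have kK': "k \<notin> K'" by (simp add: K'_def)
  let ?V = "\<lambda>w. ec_V g C n \<gamma> \<eta> x0 w t i"
  let ?D = "\<lambda>w. ec_D g C n \<gamma> \<eta> x0 w t i"
  define F1 where "F1 = (\<lambda>w. ennreal ((norm (?D w - ?V w))\<^sup>2))"
  define F2 where "F2 = (\<lambda>w. ennreal ((1 - \<delta>) * (norm (?V w))\<^sup>2))"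
  note em = ec_meas[where N="PiM K MC" and w="\<lambda>p c. pd K p c" and g=g and C=C and n=n and SG=SG and SC=SC,
      OF pad_meas g_meas C_meas, simplified, of \<gamma> \<eta> "x0" t]
  have mV: "(\<lambda>p. ?V (\<lambda>c. pd K p c)) \<in> borel_measurable (PiM K MC)"
    using em i unfolding ec_V_def by (auto intro!: borel_measurable_add borel_measurable_diff borel_measurable_scaleR)
  have mD: "(\<lambda>p. ?D (\<lambda>c. pd K p c)) \<in> borel_measurable (PiM K MC)"
    using em i by auto
  have m1: "(\<lambda>p. F1 (\<lambda>c. pd K p c)) \<in> borel_measurable (PiM K MC)"
    unfolding F1_def using mV mD by measurable
  have m2: "(\<lambda>p. F2 (\<lambda>c. pd K p c)) \<in> borel_measurable (PiM K MC)"
    unfolding F2_def using mV by measurable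
  have cV: "?V w = ?V w'" if "\<And>c. rel n (Suc t) c \<Longrightarrow> c \<noteq> k \<Longrightarrow> w c = w' c" for w w'
  proof -
    have "\<And>c. rel n t c \<Longrightarrow> w c = w' c" using that by (auto simp: rel_def k_def split: call.splits)
    note I = ec_cong[where g=g and C=C and \<gamma>=\<gamma> and \<eta>=\<eta> and ?x0.0=x0, OF this]
    have "w (Oracle (Suc t) i) = w' (Oracle (Suc t) i)" using that i by (auto simp: rel_def k_def)
    then show ?thesis using I i by (simp add: ec_V_def ec_g_def)
  qed
  have Fc: "F (\<lambda>c. W c \<omega>) = F (\<lambda>c. pd K (\<lambda>c\<in>K. W c \<omega>) c)" if "F = F1 \<or> F = F2" for F \<omega>
  proof -
    have "\<And>c. rel n (Suc t) c \<Longrightarrow> W c \<omega> = pd K (\<lambda>c\<in>K. W c \<omega>) c"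
      by (simp add: pad_def K_def JJ_def)
    note I = ec_cong_all[where g=g and C=C and \<gamma>=\<gamma> and \<eta>=\<eta> and ?x0.0=x0, OF this i]
    have "?V (\<lambda>c. W c \<omega>) = ?V (\<lambda>c. pd K (\<lambda>c\<in>K. W c \<omega>) c)"
      using I by (simp add: ec_V_def)
    then show ?thesis using that I unfolding F1_def F2_def by auto
  qed
  have KN: "K \<noteq> {}" using kK by auto
  have "(\<integral>\<^sup>+\<omega>. F1 (\<lambda>c. W c \<omega>) \<partial>M) = (\<integral>\<^sup>+p. F1 (\<lambda>c. pd K p c) \<partial>PiM K MC)"
    by (rule transfer[OF KN m1 Fc]) simp
  also have "\<dots> = (\<integral>\<^sup>+x. (\<integral>\<^sup>+y. F1 (\<lambda>c. pd K (x(k := y)) c) \<partial>MC k) \<partial>PiM K' MC)"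
    using m1 unfolding KK by (intro PSF.product_nn_integral_insert[OF finK' kK']) 
  also have "\<dots> \<le> (\<integral>\<^sup>+x. (\<integral>\<^sup>+y. F2 (\<lambda>c. pd K (x(k := y)) c) \<partial>MC k) \<partial>PiM K' MC)"
  proof (rule nn_integral_mono)
    fix x
    define v where "v = ?V (\<lambda>c. pd K x c)"
    have Vy: "?V (\<lambda>c. pd K (x(k := y)) c) = v" for y
      unfolding v_def by (rule cV) (simp add: pad_def)
    have Dy: "?D (\<lambda>c. pd K (x(k := y)) c) = C v y" for y
      using Vy kK by (simp add: ec_D_V pad_def k_def)
    interpret SCp: prob_space SC by (rule PS_SC)
    have "(\<integral>\<^sup>+y. F1 (\<lambda>c. pd K (x(k := y)) c) \<partial>MC k) = (\<integral>\<^sup>+y. ennreal ((norm (C v y - v))\<^sup>2) \<partial>SC)"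
      unfolding F1_def Dy Vy by (simp add: k_def)
    also have "\<dots> \<le> ennreal ((1 - \<delta>) * (norm v)\<^sup>2)" by (rule C_contr)
    also have "\<dots> = (\<integral>\<^sup>+y. F2 (\<lambda>c. pd K (x(k := y)) c) \<partial>MC k)"
      unfolding F2_def Vy by (simp add: k_def SCp.emeasure_space_1)
    finally show "(\<integral>\<^sup>+y. F1 (\<lambda>c. pd K (x(k := y)) c) \<partial>MC k) \<le> (\<integral>\<^sup>+y. F2 (\<lambda>c. pd K (x(k := y)) c) \<partial>MC k)" .
  qed
  also have "\<dots> = (\<integral>\<^sup>+p. F2 (\<lambda>c. pd K p c) \<partial>PiM K MC)"
    using m2 unfolding KK by (intro PSF.product_nn_integral_insert[OF finK' kK', symmetric]) 
  also have "\<dots> = (\<integral>\<^sup>+\<omega>. F2 (\<lambda>c. W c \<omega>) \<partial>M)"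
    by (rule transfer[OF KN m2 Fc, symmetric]) simp
  finally show ?thesis unfolding F1_def F2_def .
qed


lemma gradi_meas:
  assumes i: "i < n" shows "gradi i \<in> borel_measurable borel"
proof -
  interpret SGp: prob_space "SG i" by (rule PS_SG)
  have "(\<lambda>x. \<integral>s. g i x s \<partial>SG i) \<in> borel_measurable borel"
    by (rule SGp.borel_measurable_lebesgue_integral) (use g_meas[OF i] in \<open>simp add: case_prod_beta\<close>)
  moreover have "(\<lambda>x. \<integral>s. g i x s \<partial>SG i) = gradi i" using g_unbiased[OF i] by auto
  ultimately show ?thesis by simp
qed

lemma partII:
  fixes Bf :: "'v \<Rightarrow> 'v" and \<gamma> \<eta> :: real and x0 :: 'v and t :: nat
  assumes Bm: "Bf \<in> borel_measurable borel"
  defines "B \<equiv> \<lambda>w. (\<eta> / real n) *\<^sub>R (\<Sum>i<n. ec_e g C n \<gamma> \<eta> x0 w t i) + Bf (ec_x g C n \<gamma> \<eta> x0 w t)"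
    and "\<xi> \<equiv> \<lambda>w. (1 / real n) *\<^sub>R (\<Sum>i<n. ec_g g C n \<gamma> \<eta> x0 w t i - gradi i (ec_x g C n \<gamma> \<eta> x0 w t))"
  shows "(\<integral>\<^sup>+\<omega>. ennreal ((norm (B (\<lambda>c. W c \<omega>) + \<xi> (\<lambda>c. W c \<omega>)))\<^sup>2) \<partial>M)
    \<le> (\<integral>\<^sup>+\<omega>. ennreal ((norm (B (\<lambda>c. W c \<omega>)))\<^sup>2 + \<sigma>\<^sup>2 / real n) \<partial>M)"
proof -
  interpret PSF: product_sigma_finite MC
    by (simp add: product_sigma_finite_def PS prob_space_imp_sigma_finite)
  define K where "K = JJ t"
  define \<rho> where "\<rho> = (\<lambda>i. Oracle (Suc t) i)"
  define G where "G = \<rho> ` {..<n}"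
  define P where "P = K - G"
  have GK: "G \<subseteq> K" by (auto simp: G_def \<rho>_def K_def JJ_def rel_def)
  have KPG: "K = P \<union> G" using GK by (auto simp: P_def)
  have PG: "P \<inter> G = {}" by (auto simp: P_def)
  have finK: "finite K" using JJ_finite by (simp add: K_def)
  have finP: "finite P" "finite G" using finK GK by (auto simp: P_def intro: finite_subset)
  have inj: "inj_on \<rho> {..<n}" by (auto simp: \<rho>_def inj_on_def)
  define F1 where "F1 = (\<lambda>w. ennreal ((norm (B w + \<xi> w))\<^sup>2))"
  define F2 where "F2 = (\<lambda>w. ennreal ((norm (B w))\<^sup>2 + \<sigma>\<^sup>2 / real n))"
  note em = ec_meas[where N="PiM K MC" and w="\<lambda>p c. pd K p c" and g=g and C=C and n=n and SG=SG and SC=SC,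
      OF pad_meas g_meas C_meas, simplified, of \<gamma> \<eta> "x0" t]
  have mx: "(\<lambda>p. ec_x g C n \<gamma> \<eta> x0 (\<lambda>c. pd K p c) t) \<in> borel_measurable (PiM K MC)" using em by simp
  have mB: "(\<lambda>p. B (\<lambda>c. pd K p c)) \<in> borel_measurable (PiM K MC)"
    unfolding B_def using em
    by (intro borel_measurable_add borel_measurable_scaleR borel_measurable_const borel_measurable_sum
        measurable_compose[OF mx Bm]) auto
  have mxi: "(\<lambda>p. \<xi> (\<lambda>c. pd K p c)) \<in> borel_measurable (PiM K MC)"
    unfolding \<xi>_def using em
    by (intro borel_measurable_add borel_measurable_scaleR borel_measurable_const borel_measurable_sum
        borel_measurable_diff measurable_compose[OF mx gradi_meas]) auto
  have m1: "(\<lambda>p. F1 (\<lambda>c. pd K p c)) \<in> borel_measurable (PiM K MC)"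
    unfolding F1_def using mB mxi by measurable
  have m2: "(\<lambda>p. F2 (\<lambda>c. pd K p c)) \<in> borel_measurable (PiM K MC)"
    unfolding F2_def using mB by measurable
  have Fc: "F (\<lambda>c. W c \<omega>) = F (\<lambda>c. pd K (\<lambda>c\<in>K. W c \<omega>) c)" if "F = F1 \<or> F = F2" for F \<omega>
  proof -
    have A: "\<And>c. rel n (Suc t) c \<Longrightarrow> W c \<omega> = pd K (\<lambda>c\<in>K. W c \<omega>) c"
      by (simp add: pad_def K_def JJ_def)
    note I = ec_cong_all[where g=g and C=C and \<gamma>=\<gamma> and \<eta>=\<eta> and ?x0.0=x0, OF A]
    have "B (\<lambda>c. W c \<omega>) = B (\<lambda>c. pd K (\<lambda>c\<in>K. W c \<omega>) c)"
      unfolding B_def using I n by (auto intro!: sum.cong)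
    moreover have "\<xi> (\<lambda>c. W c \<omega>) = \<xi> (\<lambda>c. pd K (\<lambda>c\<in>K. W c \<omega>) c)"
      unfolding \<xi>_def using I n by (auto intro!: sum.cong)
    ultimately show ?thesis using that unfolding F1_def F2_def by auto
  qed
  have KN: "K \<noteq> {}" using JJ_ne by (simp add: K_def)
  have "(\<integral>\<^sup>+\<omega>. F1 (\<lambda>c. W c \<omega>) \<partial>M) = (\<integral>\<^sup>+p. F1 (\<lambda>c. pd K p c) \<partial>PiM K MC)"
    by (rule transfer[OF KN m1 Fc]) simp
  also have "\<dots> = (\<integral>\<^sup>+x. (\<integral>\<^sup>+y. F1 (\<lambda>c. pd K (merge P G (x, y)) c) \<partial>PiM G MC) \<partial>PiM P MC)"
    using m1 unfolding KPG by (intro PSF.product_nn_integral_fold[OF PG finP]) 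
  also have "\<dots> \<le> (\<integral>\<^sup>+x. (\<integral>\<^sup>+y. F2 (\<lambda>c. pd K (merge P G (x, y)) c) \<partial>PiM G MC) \<partial>PiM P MC)"
  proof (rule nn_integral_mono)
    fix x
    define X where "X = ec_x g C n \<gamma> \<eta> x0 (\<lambda>c. pd K x c) t"
    define b where "b = B (\<lambda>c. pd K x c)"
    have agree: "\<And>c. rel n t c \<Longrightarrow> pd K (merge P G (x, y)) c = pd K x c" for y
    proof -
      fix c assume c: "rel n t c"
      then have "c \<in> K" "c \<notin> G" by (auto simp: K_def JJ_def rel_def G_def \<rho>_def split: call.splits)
      then have "c \<in> P" by (simp add: P_def)
      then show "pd K (merge P G (x, y)) c = pd K x c" using \<open>c \<in> K\<close> PG by (simp add: pad_def)
    qed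
    note I = ec_cong[where g=g and C=C and \<gamma>=\<gamma> and \<eta>=\<eta> and ?x0.0=x0, OF agree]
    have Xy: "ec_x g C n \<gamma> \<eta> x0 (\<lambda>c. pd K (merge P G (x, y)) c) t = X" for y using I X_def by simp
    have By: "B (\<lambda>c. pd K (merge P G (x, y)) c) = b" for y
      unfolding B_def b_def using I by (auto intro!: sum.cong)
    define \<phi> where "\<phi> = (\<lambda>i s. (1 / real n) *\<^sub>R (g i X s - gradi i X))"
    have \<xi>y: "\<xi> (\<lambda>c. pd K (merge P G (x, y)) c) = (\<Sum>i<n. \<phi> i (y (\<rho> i)))" for y
    proof -
      have "\<And>i. i < n \<Longrightarrow> ec_g g C n \<gamma> \<eta> x0 (\<lambda>c. pd K (merge P G (x, y)) c) t i = g i X (y (\<rho> i))"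
      proof -
        fix i assume i: "i < n"
        have "\<rho> i \<in> G" "\<rho> i \<in> K" using i GK by (auto simp: G_def)
        then show "ec_g g C n \<gamma> \<eta> x0 (\<lambda>c. pd K (merge P G (x, y)) c) t i = g i X (y (\<rho> i))"
          using Xy[of y] PG by (simp add: ec_g_def pad_def \<rho>_def)
      qed
      then show ?thesis unfolding \<xi>_def \<phi>_def Xy scaleR_sum_right by (auto intro!: sum.cong)
    qed
    interpret PGp: prob_space "PiM G MC" by (rule prob_space_PiM) (rule PS)
    have "(\<integral>\<^sup>+y. F1 (\<lambda>c. pd K (merge P G (x, y)) c) \<partial>PiM G MC)
        = (\<integral>\<^sup>+y. ennreal ((norm (b + (\<Sum>i\<in>{..<n}. \<phi> i (y (\<rho> i)))))\<^sup>2) \<partial>PiM G MC)"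
      by (simp add: F1_def By \<xi>y)
    also have "\<dots> \<le> ennreal ((norm b)\<^sup>2) + ennreal (\<Sum>i\<in>{..<n}. \<sigma>\<^sup>2 / (real n)\<^sup>2)"
      unfolding G_def
    proof (rule noise[OF PS _ inj])
      fix i assume i: "i \<in> {..<n}"
      then have i: "i < n" by simp
      interpret SGp: prob_space "SG i" by (rule PS_SG)
      have gm: "g i X \<in> borel_measurable (SG i)"
        using measurable_compose[OF measurable_Pair[OF measurable_const[of X borel "SG i"] measurable_ident_sets[OF refl]] g_meas[OF i]]
        by simp
      show "\<phi> i \<in> borel_measurable (MC (\<rho> i))" using gm by (simp add: \<phi>_def \<rho>_def)
      show "integrable (MC (\<rho> i)) (\<phi> i)" using g_unbiased[OF i, of X] by (simp add: \<phi>_def \<rho>_def)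
      show "(\<integral>s. \<phi> i s \<partial>MC (\<rho> i)) = 0" using g_unbiased[OF i, of X]
        by (simp add: \<phi>_def \<rho>_def SGp.prob_space)
      have "(\<integral>\<^sup>+s. ennreal ((norm (\<phi> i s))\<^sup>2) \<partial>MC (\<rho> i))
           = (\<integral>\<^sup>+s. ennreal ((1 / real n)\<^sup>2) * ennreal ((norm (g i X s - gradi i X))\<^sup>2) \<partial>SG i)"
      proof -
        have *: "ennreal ((1/real n)\<^sup>2) * ennreal (z\<^sup>2) = ennreal ((z / real n)\<^sup>2)" for z :: real
          by (simp add: ennreal_mult[symmetric] power_divide)
        show ?thesis by (simp add: \<phi>_def \<rho>_def *)
      qed
      also have "\<dots> = ennreal ((1 / real n)\<^sup>2) * (\<integral>\<^sup>+s. ennreal ((norm (g i X s - gradi i X))\<^sup>2) \<partial>SG i)"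
        by (rule nn_integral_cmult) (use gm gradi_meas[OF i] in measurable)
      also have "\<dots> \<le> ennreal ((1 / real n)\<^sup>2) * ennreal (\<sigma>\<^sup>2)"
        by (rule mult_left_mono[OF g_var[OF i]]) simp
      also have "\<dots> = ennreal (\<sigma>\<^sup>2 / (real n)\<^sup>2)"
        by (simp add: ennreal_mult'[symmetric] power_divide)
      finally show "(\<integral>\<^sup>+s. ennreal ((norm (\<phi> i s))\<^sup>2) \<partial>MC (\<rho> i)) \<le> ennreal (\<sigma>\<^sup>2 / (real n)\<^sup>2)" .
    qed auto
    also have "\<dots> = ennreal ((norm b)\<^sup>2 + \<sigma>\<^sup>2 / real n)"
      using n by (simp add: ennreal_plus[symmetric] power2_eq_square del: ennreal_plus)
    also have "\<dots> = (\<integral>\<^sup>+y. F2 (\<lambda>c. pd K (merge P G (x, y)) c) \<partial>PiM G MC)"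
      unfolding F2_def By by (simp add: PGp.emeasure_space_1)
    finally show "(\<integral>\<^sup>+y. F1 (\<lambda>c. pd K (merge P G (x, y)) c) \<partial>PiM G MC) \<le> (\<integral>\<^sup>+y. F2 (\<lambda>c. pd K (merge P G (x, y)) c) \<partial>PiM G MC)" .
  qed
  also have "\<dots> = (\<integral>\<^sup>+p. F2 (\<lambda>c. pd K p c) \<partial>PiM K MC)"
    using m2 unfolding KPG by (intro PSF.product_nn_integral_fold[OF PG finP, symmetric])
  also have "\<dots> = (\<integral>\<^sup>+\<omega>. F2 (\<lambda>c. W c \<omega>) \<partial>M)"
    by (rule transfer[OF KN m2 Fc, symmetric]) simp
  finally show ?thesis unfolding F1_def F2_def .
qed

end


lemma pointwise_identity:
  fixes g :: "nat \<Rightarrow> 'v::real_inner \<Rightarrow> 's \<Rightarrow> 'v"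
  assumes n: "n > 0" and gf: "gf = (1 / real n) *\<^sub>R (\<Sum>i<n. gradi i (ec_x g C n \<gamma> \<eta> x0 w t))"
  shows "ec_x g C n \<gamma> \<eta> x0 w (Suc t) - ec_x g C n \<gamma> \<eta> x0 w t
     = - \<gamma> *\<^sub>R ((1 / real n) *\<^sub>R (\<Sum>i<n. ec_D g C n \<gamma> \<eta> x0 w t i - ec_V g C n \<gamma> \<eta> x0 w t i)
          + (((\<eta> / real n) *\<^sub>R (\<Sum>i<n. ec_e g C n \<gamma> \<eta> x0 w t i) + gf)
          + (1 / real n) *\<^sub>R (\<Sum>i<n. ec_g g C n \<gamma> \<eta> x0 w t i - gradi i (ec_x g C n \<gamma> \<eta> x0 w t))))"
proof -
  let ?D = "\<lambda>i. ec_D g C n \<gamma> \<eta> x0 w t i" and ?e = "\<lambda>i. ec_e g C n \<gamma> \<eta> x0 w t i"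
    and ?h = "\<lambda>i. ec_h g C n \<gamma> \<eta> x0 w t i" and ?g = "\<lambda>i. ec_g g C n \<gamma> \<eta> x0 w t i"
    and ?G = "\<lambda>i. gradi i (ec_x g C n \<gamma> \<eta> x0 w t)"
  have f1: "(\<Sum>i<n. ?D i - ec_V g C n \<gamma> \<eta> x0 w t i) = (\<Sum>i<n. ?D i) - \<eta> *\<^sub>R (\<Sum>i<n. ?e i) - (\<Sum>i<n. ?g i) + (\<Sum>i<n. ?h i)"
    by (simp add: ec_V_def sum_subtractf sum.distrib scaleR_sum_right algebra_simps)
  have f2: "(\<Sum>i<n. ?g i - ?G i) = (\<Sum>i<n. ?g i) - (\<Sum>i<n. ?G i)" by (simp add: sum_subtractf)
  have key: "(\<Sum>i<n. ?D i - ec_V g C n \<gamma> \<eta> x0 w t i) + (\<eta> *\<^sub>R (\<Sum>i<n. ?e i) + (\<Sum>i<n. ?G i)) + (\<Sum>i<n. ?g i - ?G i)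
      = (\<Sum>i<n. ?D i) + (\<Sum>i<n. ?h i)"
    unfolding f1 f2 by (simp add: algebra_simps)
  have "ec_x g C n \<gamma> \<eta> x0 w (Suc t) - ec_x g C n \<gamma> \<eta> x0 w t = - \<gamma> *\<^sub>R ((1 / real n) *\<^sub>R ((\<Sum>i<n. ?D i) + (\<Sum>i<n. ?h i)))"
    unfolding ec_Suc ec_hb_avg[of g C n \<gamma> \<eta> x0 w t] by (simp add: algebra_simps)
  also have "\<dots> = - \<gamma> *\<^sub>R ((1 / real n) *\<^sub>R ((\<Sum>i<n. ?D i - ec_V g C n \<gamma> \<eta> x0 w t i) + (\<eta> *\<^sub>R (\<Sum>i<n. ?e i) + (\<Sum>i<n. ?G i)) + (\<Sum>i<n. ?g i - ?G i)))"
    unfolding key ..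
  finally show ?thesis unfolding gf by (simp add: algebra_simps)
qed

lemma pointwise_bound:
  fixes A B :: "'v::real_normed_vector"
  assumes "n > 0" and "A = (1 / real n) *\<^sub>R (\<Sum>i<n. a i)"
  shows "(norm (- \<gamma> *\<^sub>R (A + B)))\<^sup>2 \<le> \<gamma>\<^sup>2 * (2 * ((1 / real n) * (\<Sum>i<n. (norm (a i))\<^sup>2)) + 2 * (norm B)\<^sup>2)"
proof -
  have "(norm (- \<gamma> *\<^sub>R (A + B)))\<^sup>2 = \<gamma>\<^sup>2 * (norm (A + B))\<^sup>2"
    by (simp add: power_mult_distrib)
  also have "\<dots> \<le> \<gamma>\<^sup>2 * (2 * (norm A)\<^sup>2 + 2 * (norm B)\<^sup>2)"
    by (rule mult_left_mono[OF sq2]) simp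
  also have "\<dots> \<le> \<gamma>\<^sup>2 * (2 * ((1 / real n) * (\<Sum>i<n. (norm (a i))\<^sup>2)) + 2 * (norm B)\<^sup>2)"
    using avg_sq[OF assms(1), of a] assms(2) by (intro mult_left_mono) auto
  finally show ?thesis .
qed

lemma B_bound:
  assumes "n > 0"
  shows "(norm ((\<eta> / real n) *\<^sub>R (\<Sum>i<n. e i) + (gf::'v::real_normed_vector)))\<^sup>2
     \<le> 2 * \<eta>\<^sup>2 * ((1 / real n) * (\<Sum>i<n. (norm (e i))\<^sup>2)) + 2 * (norm gf)\<^sup>2"
proof -
  have "(norm ((\<eta> / real n) *\<^sub>R (\<Sum>i<n. e i) + gf))\<^sup>2 \<le> 2 * (norm ((\<eta> / real n) *\<^sub>R (\<Sum>i<n. e i)))\<^sup>2 + 2 * (norm gf)\<^sup>2"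
    by (rule sq2)
  also have "(norm ((\<eta> / real n) *\<^sub>R (\<Sum>i<n. e i)))\<^sup>2 = \<eta>\<^sup>2 * (norm ((1 / real n) *\<^sub>R (\<Sum>i<n. e i)))\<^sup>2"
    by (simp add: power_mult_distrib power_divide)
  also have "\<dots> \<le> \<eta>\<^sup>2 * ((1 / real n) * (\<Sum>i<n. (norm (e i))\<^sup>2))"
    by (rule mult_left_mono[OF avg_sq[OF assms]]) simp
  finally show ?thesis by simp
qed



lemma two_ennr: "0 \<le> x \<Longrightarrow> 2 * ennreal x = ennreal (2 * x)"
  by (simp add: ennreal_mult)

lemma ennr1:
  assumes "g2 \<ge> 0" "\<And>i. a i \<ge> 0" "b \<ge> 0"
  shows "ennreal (g2 * (2 * ((1 / real n) * (\<Sum>i<n. a i)) + 2 * b))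
    = ennreal g2 * (2 * (ennreal (1 / real n) * (\<Sum>i<n. ennreal (a i))) + 2 * ennreal b)"
proof -
  have A: "(\<Sum>i<n. ennreal (a i)) = ennreal (\<Sum>i<n. a i)" by (rule sum_ennreal) (use assms in auto)
  have S: "0 \<le> (\<Sum>i<n. a i)" using assms by (simp add: sum_nonneg)
  have "ennreal (1 / real n) * ennreal (\<Sum>i<n. a i) = ennreal ((1 / real n) * (\<Sum>i<n. a i))"
    by (rule ennreal_mult[symmetric]) (use S in auto)
  moreover have "2 * ennreal ((1 / real n) * (\<Sum>i<n. a i)) = ennreal (2 * ((1 / real n) * (\<Sum>i<n. a i)))"
    using S by (intro two_ennr) simp
  moreover have "2 * ennreal b = ennreal (2 * b)" using assms by (intro two_ennr) simp
  moreover have "ennreal (2 * ((1 / real n) * (\<Sum>i<n. a i))) + ennreal (2 * b) = ennreal (2 * ((1 / real n) * (\<Sum>i<n. a i)) + 2 * b)"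
    using S assms by (simp add: ennreal_plus)
  moreover have "ennreal g2 * ennreal (2 * ((1 / real n) * (\<Sum>i<n. a i)) + 2 * b) = ennreal (g2 * (2 * ((1 / real n) * (\<Sum>i<n. a i)) + 2 * b))"
    using S assms by (simp add: ennreal_mult)
  ultimately show ?thesis unfolding A by simp
qed

lemma ennr2:
  assumes "\<And>i. e i \<ge> 0" "q \<ge> 0" "s \<ge> 0"
  shows "ennreal (2 * \<eta>\<^sup>2 * ((1 / real n) * (\<Sum>i<n. e i)) + 2 * q + s)
    = ennreal (2 * \<eta>\<^sup>2) * (ennreal (1 / real n) * (\<Sum>i<n. ennreal (e i))) + 2 * ennreal q + ennreal s"
proof -
  have A: "(\<Sum>i<n. ennreal (e i)) = ennreal (\<Sum>i<n. e i)" by (rule sum_ennreal) (use assms in auto)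
  have S: "0 \<le> (\<Sum>i<n. e i)" using assms by (simp add: sum_nonneg)
  have "ennreal (1 / real n) * ennreal (\<Sum>i<n. e i) = ennreal ((1 / real n) * (\<Sum>i<n. e i))"
    by (rule ennreal_mult[symmetric]) (use S in auto)
  moreover have "ennreal (2 * \<eta>\<^sup>2) * ennreal ((1 / real n) * (\<Sum>i<n. e i)) = ennreal (2 * \<eta>\<^sup>2 * ((1 / real n) * (\<Sum>i<n. e i)))"
    by (rule ennreal_mult[symmetric]) (use S in auto)
  moreover have "2 * ennreal q = ennreal (2 * q)" using assms by (intro two_ennr) simp
  moreover have "ennreal (2 * \<eta>\<^sup>2 * ((1 / real n) * (\<Sum>i<n. e i))) + ennreal (2 * q) + ennreal s = ennreal (2 * \<eta>\<^sup>2 * ((1 / real n) * (\<Sum>i<n. e i)) + 2 * q + s)"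
    using S assms by (simp add: ennreal_plus)
  ultimately show ?thesis unfolding A by (simp add: mult.assoc)
qed

lemma grad_avg:
  fixes fi :: "nat \<Rightarrow> 'v::real_inner \<Rightarrow> real"
  assumes n: "n > 0" and f_def: "\<And>x. f x = (1 / real n) * (\<Sum>i<n. fi i x)"
    and grad_i: "\<And>i x. i < n \<Longrightarrow> GDERIV (fi i) x :> gradi i x"
    and grad_f: "\<And>x. GDERIV f x :> gradf x"
  shows "gradf x = (1 / real n) *\<^sub>R (\<Sum>i<n. gradi i x)"
proof -
  define D where "D = (1 / real n) *\<^sub>R (\<Sum>i<n. gradi i x)"
  have fe: "f = (\<lambda>x. (1 / real n) * (\<Sum>i<n. fi i x))" using f_def by auto
  have "((\<lambda>x. \<Sum>i<n. fi i x) has_derivative (\<lambda>h. \<Sum>i<n. inner h (gradi i x))) (at x)"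
    using grad_i by (intro has_derivative_sum) (auto simp: gderiv_def)
  then have "((\<lambda>x. (1 / real n) * (\<Sum>i<n. fi i x)) has_derivative (\<lambda>h. (1 / real n) * (\<Sum>i<n. inner h (gradi i x)))) (at x)"
    by (rule has_derivative_mult_right)
  then have d2: "(f has_derivative (\<lambda>h. inner h D)) (at x)"
    unfolding fe D_def by (simp add: inner_sum_right)
  have d1: "(f has_derivative (\<lambda>h. inner h (gradf x))) (at x)" using grad_f by (simp add: gderiv_def)
  have "(\<lambda>h. inner h (gradf x)) = (\<lambda>h. inner h D)" by (rule has_derivative_unique[OF d1 d2])
  then have "inner (gradf x - D) (gradf x) = inner (gradf x - D) D" by metis
  then have "inner (gradf x - D) (gradf x - D) = 0" by (simp add: inner_diff_right)
  then show ?thesis unfolding D_def by simp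
qed

theorem lemma10:
  fixes M :: "'a measure" and W :: "call \<Rightarrow> 'a \<Rightarrow> 's"
    and SG :: "nat \<Rightarrow> 's measure" and SC :: "'s measure"
    and g :: "nat \<Rightarrow> 'v::euclidean_space \<Rightarrow> 's \<Rightarrow> 'v" and C :: "'v \<Rightarrow> 's \<Rightarrow> 'v"
    and fi :: "nat \<Rightarrow> 'v \<Rightarrow> real" and gradi :: "nat \<Rightarrow> 'v \<Rightarrow> 'v"
    and f :: "'v \<Rightarrow> real" and gradf :: "'v \<Rightarrow> 'v"
    and n :: nat and L \<gamma> \<eta> \<delta> \<sigma> :: real and x0 :: 'v and t :: nat
  assumes "prob_space M"
    and n: "n > 0"
    and \<gamma>: "\<gamma> > 0" and \<eta>: "\<eta> > 0"
    and \<delta>: "0 < \<delta>" "\<delta> \<le> 1"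
    \<comment> \<open>f = (1/n) sum f_i, each f_i differentiable, f is L-smooth\<close>
    and f_def: "\<And>x. f x = (1 / real n) * (\<Sum>i<n. fi i x)"
    and grad_i: "\<And>i x. i < n \<Longrightarrow> GDERIV (fi i) x :> gradi i x"
    and grad_f: "\<And>x. GDERIV f x :> gradf x"
    and smooth: "\<And>x y. norm (gradf x - gradf y) \<le> L * norm (x - y)"
    \<comment> \<open>independent fresh randomness at each call\<close>
    and indep: "prob_space.indep_vars M
                  (\<lambda>c. case c of Oracle _ i \<Rightarrow> SG i | Comp _ _ \<Rightarrow> SC) W UNIV"
    and distr_oracle: "\<And>s i. distr M (SG i) (W (Oracle s i)) = SG i"
    and distr_comp: "\<And>s i. distr M SC (W (Comp s i)) = SC"
    \<comment> \<open>stochastic gradient oracles\<close>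
    and g_meas: "\<And>i. i < n \<Longrightarrow> (\<lambda>p. g i (fst p) (snd p)) \<in> borel_measurable (borel \<Otimes>\<^sub>M SG i)"
    and g_unbiased: "\<And>i x. i < n \<Longrightarrow> integrable (SG i) (g i x) \<and> (\<integral>s. g i x s \<partial>SG i) = gradi i x"
    and g_var: "\<And>i x. i < n \<Longrightarrow>
                  (\<integral>\<^sup>+s. ennreal ((norm (g i x s - gradi i x))\<^sup>2) \<partial>SG i) \<le> ennreal (\<sigma>\<^sup>2)"
    \<comment> \<open>compressor\<close>
    and C_meas: "(\<lambda>p. C (fst p) (snd p)) \<in> borel_measurable (borel \<Otimes>\<^sub>M SC)"
    and C_contr: "\<And>v. (\<integral>\<^sup>+s. ennreal ((norm (C v s - v))\<^sup>2) \<partial>SC) \<le> ennreal ((1 - \<delta>) * (norm v)\<^sup>2)"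
  shows
    "(\<integral>\<^sup>+\<omega>. ennreal ((norm (ec_x g C n \<gamma> \<eta> x0 (\<lambda>c. W c \<omega>) (Suc t)
                                 - ec_x g C n \<gamma> \<eta> x0 (\<lambda>c. W c \<omega>) t))\<^sup>2) \<partial>M)
     \<le> ennreal (\<gamma>\<^sup>2) *
        ( ennreal (2 * (1 - \<delta>)) *
            (ennreal (1 / real n) * (\<Sum>i<n. \<integral>\<^sup>+\<omega>. ennreal ((norm
                (\<eta> *\<^sub>R ec_e g C n \<gamma> \<eta> x0 (\<lambda>c. W c \<omega>) t i
                 + ec_g g C n \<gamma> \<eta> x0 (\<lambda>c. W c \<omega>) t i
                 - ec_h g C n \<gamma> \<eta> x0 (\<lambda>c. W c \<omega>) t i))\<^sup>2) \<partial>M))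
        + ennreal (4 * \<eta>\<^sup>2) *
            (ennreal (1 / real n) * (\<Sum>i<n. \<integral>\<^sup>+\<omega>. ennreal ((norm
                (ec_e g C n \<gamma> \<eta> x0 (\<lambda>c. W c \<omega>) t i))\<^sup>2) \<partial>M))
        + 4 * (\<integral>\<^sup>+\<omega>. ennreal ((norm (gradf (ec_x g C n \<gamma> \<eta> x0 (\<lambda>c. W c \<omega>) t)))\<^sup>2) \<partial>M)
        + ennreal (2 * \<sigma>\<^sup>2 / real n))"
  proof -
  have Mc_eq: "Mc SG SC = (\<lambda>c. case c of Oracle _ i \<Rightarrow> SG i | Comp _ _ \<Rightarrow> SC)"
    by (rule ext) (simp add: Mc_def)
  interpret S: ec_setting M W SG SC g C gradi n \<delta> \<sigma>
    unfolding ec_setting_def Mc_eq using assms by auto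
  interpret P: prob_space M by fact
  have gf: "\<And>x. gradf x = (1 / real n) *\<^sub>R (\<Sum>i<n. gradi i x)"
    by (rule grad_avg[OF n f_def grad_i grad_f]) auto
  have gfm: "gradf \<in> borel_measurable borel"
    unfolding gf[abs_def] using S.gradi_meas
    by (intro borel_measurable_scaleR borel_measurable_const borel_measurable_sum) auto
  define X where "X = (\<lambda>\<omega>. ec_x g C n \<gamma> \<eta> x0 (\<lambda>c. W c \<omega>) t)"
  define a where "a = (\<lambda>i \<omega>. (norm (ec_D g C n \<gamma> \<eta> x0 (\<lambda>c. W c \<omega>) t i - ec_V g C n \<gamma> \<eta> x0 (\<lambda>c. W c \<omega>) t i))\<^sup>2)"
  define v where "v = (\<lambda>i \<omega>. (norm (ec_V g C n \<gamma> \<eta> x0 (\<lambda>c. W c \<omega>) t i))\<^sup>2)"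
  define E where "E = (\<lambda>i \<omega>. (norm (ec_e g C n \<gamma> \<eta> x0 (\<lambda>c. W c \<omega>) t i))\<^sup>2)"
  define Gq where "Gq = (\<lambda>\<omega>. (norm (gradf (X \<omega>)))\<^sup>2)"
  define Bv where "Bv = (\<lambda>\<omega>. (\<eta> / real n) *\<^sub>R (\<Sum>i<n. ec_e g C n \<gamma> \<eta> x0 (\<lambda>c. W c \<omega>) t i) + gradf (ec_x g C n \<gamma> \<eta> x0 (\<lambda>c. W c \<omega>) t))"
  define \<xi> where "\<xi> = (\<lambda>\<omega>. (1 / real n) *\<^sub>R (\<Sum>i<n. ec_g g C n \<gamma> \<eta> x0 (\<lambda>c. W c \<omega>) t i - gradi i (ec_x g C n \<gamma> \<eta> x0 (\<lambda>c. W c \<omega>) t)))"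
  define b where "b = (\<lambda>\<omega>. (norm (Bv \<omega> + \<xi> \<omega>))\<^sup>2)"
  define q where "q = (\<lambda>\<omega>. (norm (Bv \<omega>))\<^sup>2)"
  define \<Delta> where "\<Delta> = (\<lambda>\<omega>. (norm (ec_x g C n \<gamma> \<eta> x0 (\<lambda>c. W c \<omega>) (Suc t) - ec_x g C n \<gamma> \<eta> x0 (\<lambda>c. W c \<omega>) t))\<^sup>2)"
  note em = ec_meas[where N=M and w="\<lambda>\<omega> c. W c \<omega>" and g=g and C=C and n=n and SG=SG and SC=SC,
      OF S.rv S.g_meas C_meas, simplified, of \<gamma> \<eta> "x0" t]
  note em1 = ec_meas[where N=M and w="\<lambda>\<omega> c. W c \<omega>" and g=g and C=C and n=n and SG=SG and SC=SC,
      OF S.rv S.g_meas C_meas, simplified, of \<gamma> \<eta> "x0" "Suc t"]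
  have mX: "X \<in> borel_measurable M" using em by (simp add: X_def)
  have mV: "\<And>i. i < n \<Longrightarrow> (\<lambda>\<omega>. ec_V g C n \<gamma> \<eta> x0 (\<lambda>c. W c \<omega>) t i) \<in> borel_measurable M"
    using em unfolding ec_V_def by (auto intro!: borel_measurable_add borel_measurable_diff borel_measurable_scaleR)
  have ma: "\<And>i. i < n \<Longrightarrow> a i \<in> borel_measurable M"
    unfolding a_def using em mV by (auto intro!: borel_measurable_power borel_measurable_norm borel_measurable_diff)
  have mv: "\<And>i. i < n \<Longrightarrow> v i \<in> borel_measurable M"
    unfolding v_def using mV by (auto intro!: borel_measurable_power borel_measurable_norm)
  have mE: "\<And>i. i < n \<Longrightarrow> E i \<in> borel_measurable M"
    unfolding E_def using em by (auto intro!: borel_measurable_power borel_measurable_norm)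
  have mG: "Gq \<in> borel_measurable M"
    unfolding Gq_def using measurable_compose[OF mX gfm] by (auto intro!: borel_measurable_power borel_measurable_norm)
  have mBv: "Bv \<in> borel_measurable M"
    unfolding Bv_def using em measurable_compose[OF mX gfm] unfolding X_def
    by (intro borel_measurable_add borel_measurable_scaleR borel_measurable_const borel_measurable_sum) auto
  have mxi: "\<xi> \<in> borel_measurable M"
    unfolding \<xi>_def using em measurable_compose[OF mX S.gradi_meas] unfolding X_def
    by (intro borel_measurable_scaleR borel_measurable_const borel_measurable_sum borel_measurable_diff) auto
  have mb: "b \<in> borel_measurable M" unfolding b_def using mBv mxi by measurable
  have mq: "q \<in> borel_measurable M" unfolding q_def using mBv by measurable
  have pw: "ennreal (\<Delta> \<omega>) \<le> ennreal (\<gamma>\<^sup>2) * (2 * (ennreal (1 / real n) * (\<Sum>i<n. ennreal (a i \<omega>))) + 2 * ennreal (b \<omega>))" for \<omega>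
  proof -
    have "ec_x g C n \<gamma> \<eta> x0 (\<lambda>c. W c \<omega>) (Suc t) - ec_x g C n \<gamma> \<eta> x0 (\<lambda>c. W c \<omega>) t
      = - \<gamma> *\<^sub>R ((1 / real n) *\<^sub>R (\<Sum>i<n. ec_D g C n \<gamma> \<eta> x0 (\<lambda>c. W c \<omega>) t i - ec_V g C n \<gamma> \<eta> x0 (\<lambda>c. W c \<omega>) t i)
          + (Bv \<omega> + \<xi> \<omega>))"
      unfolding Bv_def \<xi>_def by (rule pointwise_identity[OF n gf])
    then have "\<Delta> \<omega> \<le> \<gamma>\<^sup>2 * (2 * ((1 / real n) * (\<Sum>i<n. a i \<omega>)) + 2 * b \<omega>)"
      unfolding \<Delta>_def a_def b_def by (simp only: pointwise_bound[OF n refl])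
    then have "ennreal (\<Delta> \<omega>) \<le> ennreal (\<gamma>\<^sup>2 * (2 * ((1 / real n) * (\<Sum>i<n. a i \<omega>)) + 2 * b \<omega>))"
      by (rule ennreal_leI)
    also have "\<dots> = ennreal (\<gamma>\<^sup>2) * (2 * (ennreal (1 / real n) * (\<Sum>i<n. ennreal (a i \<omega>))) + 2 * ennreal (b \<omega>))"
      by (rule ennr1) (auto simp: a_def b_def)
    finally show ?thesis .
  qed
  have step1: "(\<integral>\<^sup>+\<omega>. ennreal (\<Delta> \<omega>) \<partial>M)
     \<le> ennreal (\<gamma>\<^sup>2) * (2 * (ennreal (1 / real n) * (\<Sum>i<n. \<integral>\<^sup>+\<omega>. ennreal (a i \<omega>) \<partial>M)) + 2 * (\<integral>\<^sup>+\<omega>. ennreal (b \<omega>) \<partial>M))"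
  proof -
    have "(\<integral>\<^sup>+\<omega>. ennreal (\<Delta> \<omega>) \<partial>M) \<le> (\<integral>\<^sup>+\<omega>. ennreal (\<gamma>\<^sup>2) * (2 * (ennreal (1 / real n) * (\<Sum>i<n. ennreal (a i \<omega>))) + 2 * ennreal (b \<omega>)) \<partial>M)"
      by (rule nn_integral_mono) (rule pw)
    also have "\<dots> = ennreal (\<gamma>\<^sup>2) * (\<integral>\<^sup>+\<omega>. (2 * (ennreal (1 / real n) * (\<Sum>i<n. ennreal (a i \<omega>))) + 2 * ennreal (b \<omega>)) \<partial>M)"
      by (rule nn_integral_cmult) (use ma mb in measurable)
    also have "(\<integral>\<^sup>+\<omega>. (2 * (ennreal (1 / real n) * (\<Sum>i<n. ennreal (a i \<omega>))) + 2 * ennreal (b \<omega>)) \<partial>M)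
        = (\<integral>\<^sup>+\<omega>. 2 * (ennreal (1 / real n) * (\<Sum>i<n. ennreal (a i \<omega>))) \<partial>M) + (\<integral>\<^sup>+\<omega>. 2 * ennreal (b \<omega>) \<partial>M)"
      by (rule nn_integral_add) (use ma mb in measurable)
    also have "(\<integral>\<^sup>+\<omega>. 2 * (ennreal (1 / real n) * (\<Sum>i<n. ennreal (a i \<omega>))) \<partial>M)
        = 2 * (ennreal (1 / real n) * (\<integral>\<^sup>+\<omega>. (\<Sum>i<n. ennreal (a i \<omega>)) \<partial>M))"
      using ma by (simp add: nn_integral_cmult mult.assoc)
    also have "(\<integral>\<^sup>+\<omega>. (\<Sum>i<n. ennreal (a i \<omega>)) \<partial>M) = (\<Sum>i<n. \<integral>\<^sup>+\<omega>. ennreal (a i \<omega>) \<partial>M)"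
      by (rule nn_integral_sum) (use ma in auto)
    also have "(\<integral>\<^sup>+\<omega>. 2 * ennreal (b \<omega>) \<partial>M) = 2 * (\<integral>\<^sup>+\<omega>. ennreal (b \<omega>) \<partial>M)"
      using mb by (simp add: nn_integral_cmult)
    finally show ?thesis .
  qed
  have stepI: "(\<integral>\<^sup>+\<omega>. ennreal (a i \<omega>) \<partial>M) \<le> ennreal (1 - \<delta>) * (\<integral>\<^sup>+\<omega>. ennreal (v i \<omega>) \<partial>M)" if i: "i < n" for i
  proof -
    have "(\<integral>\<^sup>+\<omega>. ennreal (a i \<omega>) \<partial>M) \<le> (\<integral>\<^sup>+\<omega>. ennreal ((1 - \<delta>) * v i \<omega>) \<partial>M)"
      unfolding a_def v_def by (rule S.partI[OF i])
    also have "\<dots> = (\<integral>\<^sup>+\<omega>. ennreal (1 - \<delta>) * ennreal (v i \<omega>) \<partial>M)"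
      using \<delta> by (intro nn_integral_cong) (simp add: ennreal_mult v_def)
    also have "\<dots> = ennreal (1 - \<delta>) * (\<integral>\<^sup>+\<omega>. ennreal (v i \<omega>) \<partial>M)"
      by (rule nn_integral_cmult) (use mv[OF i] in measurable)
    finally show ?thesis .
  qed
  have stepII: "(\<integral>\<^sup>+\<omega>. ennreal (b \<omega>) \<partial>M)
     \<le> ennreal (2 * \<eta>\<^sup>2) * (ennreal (1 / real n) * (\<Sum>i<n. \<integral>\<^sup>+\<omega>. ennreal (E i \<omega>) \<partial>M)) + 2 * (\<integral>\<^sup>+\<omega>. ennreal (Gq \<omega>) \<partial>M) + ennreal (\<sigma>\<^sup>2 / real n)"
  proof -
    have "(\<integral>\<^sup>+\<omega>. ennreal (b \<omega>) \<partial>M) \<le> (\<integral>\<^sup>+\<omega>. ennreal (q \<omega> + \<sigma>\<^sup>2 / real n) \<partial>M)"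
      unfolding b_def q_def Bv_def \<xi>_def by (rule S.partII[OF gfm])
    also have "\<dots> \<le> (\<integral>\<^sup>+\<omega>. ennreal (2 * \<eta>\<^sup>2) * (ennreal (1 / real n) * (\<Sum>i<n. ennreal (E i \<omega>))) + 2 * ennreal (Gq \<omega>) + ennreal (\<sigma>\<^sup>2 / real n) \<partial>M)"
    proof (rule nn_integral_mono)
      fix \<omega>
      have "q \<omega> \<le> 2 * \<eta>\<^sup>2 * ((1 / real n) * (\<Sum>i<n. E i \<omega>)) + 2 * Gq \<omega>"
        unfolding q_def Bv_def E_def Gq_def X_def by (rule B_bound[OF n])
      then have "ennreal (q \<omega> + \<sigma>\<^sup>2 / real n) \<le> ennreal (2 * \<eta>\<^sup>2 * ((1 / real n) * (\<Sum>i<n. E i \<omega>)) + 2 * Gq \<omega> + \<sigma>\<^sup>2 / real n)"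
        by (intro ennreal_leI) simp
      also have "\<dots> = ennreal (2 * \<eta>\<^sup>2) * (ennreal (1 / real n) * (\<Sum>i<n. ennreal (E i \<omega>))) + 2 * ennreal (Gq \<omega>) + ennreal (\<sigma>\<^sup>2 / real n)"
        by (rule ennr2) (auto simp: E_def Gq_def)
      finally show "ennreal (q \<omega> + \<sigma>\<^sup>2 / real n) \<le> \<dots>" .
    qed
    also have "\<dots> = (\<integral>\<^sup>+\<omega>. ennreal (2 * \<eta>\<^sup>2) * (ennreal (1 / real n) * (\<Sum>i<n. ennreal (E i \<omega>))) \<partial>M)
        + (\<integral>\<^sup>+\<omega>. 2 * ennreal (Gq \<omega>) \<partial>M) + (\<integral>\<^sup>+\<omega>. ennreal (\<sigma>\<^sup>2 / real n) \<partial>M)"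
      using mE mG by (simp add: nn_integral_add)
    also have "(\<integral>\<^sup>+\<omega>. ennreal (2 * \<eta>\<^sup>2) * (ennreal (1 / real n) * (\<Sum>i<n. ennreal (E i \<omega>))) \<partial>M)
        = ennreal (2 * \<eta>\<^sup>2) * (ennreal (1 / real n) * (\<Sum>i<n. \<integral>\<^sup>+\<omega>. ennreal (E i \<omega>) \<partial>M))"
    proof -
      have "(\<integral>\<^sup>+\<omega>. (\<Sum>i<n. ennreal (E i \<omega>)) \<partial>M) = (\<Sum>i<n. \<integral>\<^sup>+\<omega>. ennreal (E i \<omega>) \<partial>M)"
        by (rule nn_integral_sum) (use mE in auto)
      then show ?thesis using mE by (simp add: nn_integral_cmult mult.assoc[symmetric])
    qed
    also have "(\<integral>\<^sup>+\<omega>. 2 * ennreal (Gq \<omega>) \<partial>M) = 2 * (\<integral>\<^sup>+\<omega>. ennreal (Gq \<omega>) \<partial>M)"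
      using mG by (simp add: nn_integral_cmult)
    also have "(\<integral>\<^sup>+\<omega>. ennreal (\<sigma>\<^sup>2 / real n) \<partial>M) = ennreal (\<sigma>\<^sup>2 / real n)"
      by (simp add: P.emeasure_space_1)
    finally show ?thesis .
  qed
  define HH where "HH = (\<Sum>i<n. \<integral>\<^sup>+\<omega>. ennreal (v i \<omega>) \<partial>M)"
  define EE where "EE = (\<Sum>i<n. \<integral>\<^sup>+\<omega>. ennreal (E i \<omega>) \<partial>M)"
  define GG where "GG = (\<integral>\<^sup>+\<omega>. ennreal (Gq \<omega>) \<partial>M)"
  have sI: "(\<Sum>i<n. \<integral>\<^sup>+\<omega>. ennreal (a i \<omega>) \<partial>M) \<le> ennreal (1 - \<delta>) * HH"
    unfolding HH_def sum_distrib_left by (rule sum_mono) (use stepI in auto)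
  have "(\<integral>\<^sup>+\<omega>. ennreal (\<Delta> \<omega>) \<partial>M)
     \<le> ennreal (\<gamma>\<^sup>2) * (2 * (ennreal (1 / real n) * (ennreal (1 - \<delta>) * HH))
        + 2 * (ennreal (2 * \<eta>\<^sup>2) * (ennreal (1 / real n) * EE) + 2 * GG + ennreal (\<sigma>\<^sup>2 / real n)))"
    using step1 unfolding EE_def GG_def
    by (rule order_trans) (intro mult_left_mono add_mono sI stepII order_refl; simp)
  also have "\<dots> = ennreal (\<gamma>\<^sup>2) * (ennreal (2 * (1 - \<delta>)) * (ennreal (1 / real n) * HH)
        + ennreal (4 * \<eta>\<^sup>2) * (ennreal (1 / real n) * EE) + 4 * GG + ennreal (2 * \<sigma>\<^sup>2 / real n))"
  proof -
    have e1: "ennreal (2 * (1 - \<delta>)) = 2 * ennreal (1 - \<delta>)" using \<delta> by (simp add: two_ennr)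
    have e2: "ennreal (4 * \<eta>\<^sup>2) = 2 * ennreal (2 * \<eta>\<^sup>2)" by (simp add: two_ennr)
    have e3: "ennreal (2 * \<sigma>\<^sup>2 / real n) = 2 * ennreal (\<sigma>\<^sup>2 / real n)" by (simp add: two_ennr)
    have e4: "(4::ennreal) = 2 * 2" by simp
    show ?thesis unfolding e1 e2 e3 e4 by (simp add: distrib_left mult_ac)
  qed
  finally show ?thesis
    unfolding \<Delta>_def HH_def EE_def GG_def v_def E_def Gq_def X_def ec_V_def .
qed

end
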